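(* Assume $N>2m$, where $m=\max_{i\in\mathcal{B}}r_i$, and let $\delta=N/m$. Let $p=\sum_{i}v_ix_i$ be the value of the output of Algorithm 1 (described below), and let $\mathrm{OPT}$ be the optimal value of the WDP. Then $p\ge \alpha\cdot\mathrm{OPT}$, where $\alpha=\frac{\delta-2}{\delta e-2}$.
   Context: Setting: a finite set of bidders $\mathcal{B}=\mathcal{B}_r\cup\mathcal{B}_u$ (disjoint), indexed $1,\dots,|\mathcal{B}|$, and $N$ resource blocks $k=1,\dots,N$. Each bidder $i$ has a bid $(r_i,v_i)$ with $r_i$ a positive integer and $v_i\ge 0$. The WDP is: maximize $\sum_i v_i x_i$ subject to $\sum_k a_{ik}=r_ix_i$ for $1\le i\le|\mathcal{B}|$; $\sum_{i=1}^{|\mathcal{B}|+1}a_{ik}\le1$ for all $k$; $\sum_k a_{ik}\le\sum_k a_{|\mathcal{B}|+1,k}$ for $i\in\mathcal{B}_r$; $a_{ik},x_i\in\{0,1\}$. The index $|\mathcal{B}|+1$ denotes reserved RBs. Algorithm 1: 1. Initialize $x_i=0$ for all $i$, $\mathcal{C}=\emptyset$, $p=0$, $t=0$, $\lambda^0=1/N$. 2. While $\mathcal{C}\ne\mathcal{B}$ and $N\lambda^t\le\exp(\delta-2)$: (a) pick $\mu=\arg\max_{i\in\mathcal{B}\setminus\mathcal{C}}v_i/r_i$; (b) set $x_\mu=1$, $p\leftarrow p+v_\mu$ and $\mathcal{C}\leftarrow\mathcal{C}\cup\{\mu\}$; (c) set $\lambda^{t+1}=\lambda^t\exp(\delta-2)^{r_\mu/(N-2m)}$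 and $t\leftarrow t+1$. *)

theory Defs
  imports Complex_Main
begin

text \<open>Bidders are 1..n (n = |B|), resource blocks are 1..N, index n+1 denotes
  reserved RBs. Br is the set of bidders in B_r; B_u = {1..n} - Br.\<close>

definition wdp_feasible ::
  "nat \<Rightarrow> nat \<Rightarrow> nat set \<Rightarrow> (nat \<Rightarrow> nat) \<Rightarrow> (nat \<Rightarrow> nat \<Rightarrow> nat) \<Rightarrow> (nat \<Rightarrow> nat) \<Rightarrow> bool" where
  "wdp_feasible n N Br r a x \<longleftrightarrow>
     (\<forall>i\<in>{1..n+1}. \<forall>k\<in>{1..N}. a i k \<in> {0,1}) \<and>
     (\<forall>i\<in>{1..n}. x i \<in> {0,1}) \<and>
     (\<forall>i\<in>{1..n}. (\<Sum>k=1..N. a i k) = r i * x i) \<and>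
     (\<forall>k\<in>{1..N}. (\<Sum>i=1..n+1. a i k) \<le> 1) \<and>
     (\<forall>i\<in>Br. (\<Sum>k=1..N. a i k) \<le> (\<Sum>k=1..N. a (n+1) k))"

definition wdp_value :: "nat \<Rightarrow> (nat \<Rightarrow> real) \<Rightarrow> (nat \<Rightarrow> nat) \<Rightarrow> real" where
  "wdp_value n v x = (\<Sum>i=1..n. v i * real (x i))"

definition wdp_opt ::
  "nat \<Rightarrow> nat \<Rightarrow> nat set \<Rightarrow> (nat \<Rightarrow> nat) \<Rightarrow> (nat \<Rightarrow> real) \<Rightarrow> real" where
  "wdp_opt n N Br r v = Sup {wdp_value n v x | a x. wdp_feasible n N Br r a x}"

definition max_req :: "nat \<Rightarrow> (nat \<Rightarrow> nat) \<Rightarrow> nat" where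
  "max_req n r = Max (r ` {1..n})"

definition delta :: "nat \<Rightarrow> nat \<Rightarrow> (nat \<Rightarrow> nat) \<Rightarrow> real" where
  "delta n N r = real N / real (max_req n r)"

fun alg_lambda :: "nat \<Rightarrow> nat \<Rightarrow> (nat \<Rightarrow> nat) \<Rightarrow> nat list \<Rightarrow> nat \<Rightarrow> real" where
  "alg_lambda n N r mus 0 = 1 / real N"
| "alg_lambda n N r mus (Suc t) =
     alg_lambda n N r mus t *
     exp (delta n N r - 2) powr (real (r (mus ! t)) / (real N - 2 * real (max_req n r)))"

text \<open>mus is a complete execution of Algorithm 1: the t-th iteration is entered
  (loop condition holds), picks an argmax of v_i/r_i among unchosen bidders
  (arbitrary tie-breaking), and after the last iteration the loop condition fails.\<close>
definition alg1_run ::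
  "nat \<Rightarrow> nat \<Rightarrow> (nat \<Rightarrow> nat) \<Rightarrow> (nat \<Rightarrow> real) \<Rightarrow> nat list \<Rightarrow> bool" where
  "alg1_run n N r v mus \<longleftrightarrow>
     (\<forall>t < length mus.
        set (take t mus) \<noteq> {1..n} \<and>
        real N * alg_lambda n N r mus t \<le> exp (delta n N r - 2) \<and>
        mus ! t \<in> {1..n} - set (take t mus) \<and>
        (\<forall>j \<in> {1..n} - set (take t mus). v j / real (r j) \<le> v (mus ! t) / real (r (mus ! t)))) \<and>
     \<not> (set mus \<noteq> {1..n} \<and>
        real N * alg_lambda n N r mus (length mus) \<le> exp (delta n N r - 2))"

definition alg1_x :: "nat list \<Rightarrow> nat \<Rightarrow> nat" where
  "alg1_x mus i = (if i \<in> set mus then 1 else 0)"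

end

theory Submission
  imports Defs
begin

lemma lambda_closed:
  "alg_lambda n N r mus t =
     exp ((delta n N r - 2) * (\<Sum>j<t. real (r (mus ! j))) / (real N - 2 * real (max_req n r))) / real N"
proof (induction t)
  case 0
  then show ?case by simp
next
  case (Suc t)
  have "exp (delta n N r - 2) powr (real (r (mus ! t)) / (real N - 2 * real (max_req n r)))
        = exp ((delta n N r - 2) * real (r (mus ! t)) / (real N - 2 * real (max_req n r)))"
    by (simp add: powr_def)
  then show ?case using Suc
    by (simp add: exp_add[symmetric] add_divide_distrib distrib_left)
qed

lemma feas_bound:
  assumes "wdp_feasible n N Br r a x"
  shows "(\<Sum>i=1..n. r i * x i) \<le> N" and "\<forall>i\<in>{1..n}. x i \<in> {0,1}"
proof -
  have A: "\<forall>i\<in>{1..n}. (\<Sum>k=1..N. a i k) = r i * x i"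
    and B: "\<forall>k\<in>{1..N}. (\<Sum>i=1..n+1. a i k) \<le> 1"
    using assms unfolding wdp_feasible_def by auto
  have "(\<Sum>i=1..n. r i * x i) = (\<Sum>i=1..n. \<Sum>k=1..N. a i k)"
    using A by simp
  also have "\<dots> = (\<Sum>k=1..N. \<Sum>i=1..n. a i k)" by (rule sum.swap)
  also have "\<dots> \<le> (\<Sum>k=1..N. \<Sum>i=1..n+1. a i k)"
    by (intro sum_mono sum_mono2) auto
  also have "\<dots> \<le> (\<Sum>k=1..N. (1::nat))" using B by (intro sum_mono) auto
  finally show "(\<Sum>i=1..n. r i * x i) \<le> N" by simp
  show "\<forall>i\<in>{1..n}. x i \<in> {0,1}" using assms unfolding wdp_feasible_def by auto
qed

lemma opt_bound:
  assumes "\<And>a x. wdp_feasible n N Br r a x \<Longrightarrow> wdp_value n v x \<le> B"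
  shows "wdp_opt n N Br r v \<le> B" and "wdp_opt n N Br r v \<ge> 0"
proof -
  let ?W = "{wdp_value n v x | a x. wdp_feasible n N Br r a x}"
  have f0: "wdp_feasible n N Br r (\<lambda>i k. 0) (\<lambda>i. 0)"
    unfolding wdp_feasible_def by auto
  have v0: "wdp_value n v (\<lambda>i. 0) = 0" unfolding wdp_value_def by simp
  have ne: "0 \<in> ?W" using f0 v0 by force
  have ub: "\<forall>w\<in>?W. w \<le> B" using assms by auto
  show "wdp_opt n N Br r v \<le> B" unfolding wdp_opt_def
    using ne ub by (intro cSup_least) auto
  have "bdd_above ?W" using ub by (auto simp: bdd_above_def)
  then show "wdp_opt n N Br r v \<ge> 0" unfolding wdp_opt_def
    using ne by (rule cSup_upper[rotated])
qed

theorem theorem4: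
  fixes n N :: nat and Br :: "nat set" and r :: "nat \<Rightarrow> nat" and v :: "nat \<Rightarrow> real"
    and mus :: "nat list"
  assumes "n \<ge> 1"
    and "Br \<subseteq> {1..n}"
    and "\<forall>i\<in>{1..n}. r i > 0"
    and "\<forall>i\<in>{1..n}. v i \<ge> 0"
    and "N > 2 * max_req n r"
    and "alg1_run n N r v mus"
  shows "wdp_value n v (alg1_x mus) \<ge>
           (delta n N r - 2) / (delta n N r * exp 1 - 2) * wdp_opt n N Br r v"
proof -
  define m where "m = max_req n r"
  define D where "D = delta n N r"
  define c where "c = real N - 2 * real m"
  define T where "T = length mus"
  define S where "S = set mus"
  define p where "p = wdp_value n v (alg1_x mus)"
  define OPT where "OPT = wdp_opt n N Br r v"
  have run1: "\<forall>t < T.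
        set (take t mus) \<noteq> {1..n} \<and>
        real N * alg_lambda n N r mus t \<le> exp (D - 2) \<and>
        mus ! t \<in> {1..n} - set (take t mus) \<and>
        (\<forall>j \<in> {1..n} - set (take t mus). v j / real (r j) \<le> v (mus ! t) / real (r (mus ! t)))"
    and run2: "\<not> (S \<noteq> {1..n} \<and> real N * alg_lambda n N r mus T \<le> exp (D - 2))"
    using assms(6) unfolding alg1_run_def D_def T_def S_def by auto
  have "r 1 \<le> m" unfolding m_def max_req_def using assms(1) by (intro Max_ge) auto
  moreover have "r 1 > 0" using assms(1,3) by auto
  ultimately have mpos: "m > 0" by linarith
  have Nm: "real N > 2 * real m" using assms(5) unfolding m_def by linarith
  have cpos: "c > 0" using Nm unfolding c_def by simp
  have Dgt: "D > 2" unfolding D_def delta_def m_def[symmetric] using mpos Nm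
    by (simp add: field_simps)
  have SS: "S \<subseteq> {1..n}"
  proof
    fix i assume "i \<in> S"
    then obtain t where "t < T" "i = mus ! t" unfolding S_def T_def by (auto simp: in_set_conv_nth)
    then show "i \<in> {1..n}" using run1 by auto
  qed
  have dist: "distinct mus"
    unfolding distinct_conv_nth
  proof (intro allI impI)
    fix i j assume h: "i < length mus" "j < length mus" "i \<noteq> j"
    show "mus ! i \<noteq> mus ! j"
    proof (cases "i < j")
      case True
      have "mus ! i \<in> set (take j mus)" using True h by (auto simp: in_set_conv_nth)
      then show ?thesis using run1 h unfolding T_def by auto
    next
      case False
      then have "j < i" using h by auto
      then have "mus ! j \<in> set (take i mus)" using h by (auto simp: in_set_conv_nth)
      then show ?thesis using run1 h unfolding T_def by auto
    qed
  qed
  have vnn: "\<forall>i\<in>{1..n}. v i \<ge> 0" using assms(4) .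
  have pS: "p = sum v S"
  proof -
    have "p = (\<Sum>i\<in>{1..n}. if i \<in> S then v i else 0)"
      unfolding p_def wdp_value_def alg1_x_def S_def by (intro sum.cong) auto
    also have "\<dots> = sum v ({1..n} \<inter> S)" by (simp add: sum.inter_restrict)
    also have "{1..n} \<inter> S = S" using SS by auto
    finally show ?thesis .
  qed
  have pnn: "p \<ge> 0" unfolding pS using SS vnn by (intro sum_nonneg) auto
  have val_nn: "\<And>x. wdp_value n v x \<ge> 0" unfolding wdp_value_def using vnn
    by (intro sum_nonneg) auto
  have lam: "real N * alg_lambda n N r mus T = exp ((D - 2) * (\<Sum>j<T. real (r (mus ! j))) / c)"
    unfolding lambda_closed D_def[symmetric] c_def m_def using Nm by simp
  define R where "R = (\<Sum>i\<in>S. real (r i))"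
  have RT: "(\<Sum>j<T. real (r (mus ! j))) = R"
  proof -
    have "(\<Sum>j<T. real (r (mus ! j))) = sum_list (map (\<lambda>i. real (r i)) mus)"
      unfolding T_def by (simp add: sum_list_sum_nth lessThan_atLeast0)
    also have "\<dots> = R" unfolding R_def S_def using dist by (simp add: sum_list_distinct_conv_sum_set)
    finally show ?thesis .
  qed
  have alpha_le: "(D - 2) / (D * exp 1 - 2) \<le> c / real N"
  proof -
    have e2: "exp 1 \<ge> (2::real)" using exp_ge_add_one_self[of 1] by simp
    have "D * exp 1 \<ge> D * 2" using e2 Dgt by (intro mult_left_mono) auto
    then have "D * exp 1 - 2 \<ge> D" using Dgt by linarith
    moreover have dpos: "D > 0" using Dgt by simp
    ultimately have "(D - 2) / (D * exp 1 - 2) \<le> (D - 2) / D"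
      using Dgt by (intro divide_left_mono) auto
    also have "(D - 2) / D = c / real N"
      unfolding D_def delta_def m_def[symmetric] c_def using mpos Nm
      by (simp add: field_simps)
    finally show ?thesis .
  qed
  show ?thesis
  proof (cases "S = {1..n}")
    case True
    have "\<And>a x. wdp_feasible n N Br r a x \<Longrightarrow> wdp_value n v x \<le> p"
    proof -
      fix a x assume "wdp_feasible n N Br r a x"
      then have x01: "\<forall>i\<in>{1..n}. x i \<in> {0,1}" by (rule feas_bound)
      have "wdp_value n v x \<le> (\<Sum>i=1..n. v i)" unfolding wdp_value_def
      proof (intro sum_mono)
        fix i assume "i \<in> {1..n}"
        then have "x i = 0 \<or> x i = 1" "v i \<ge> 0" using x01 vnn by auto
        then show "v i * real (x i) \<le> v i" by auto
      qed
      then show "wdp_value n v x \<le> p" unfolding pS True by simp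
    qed
    from opt_bound[OF this] have o1: "OPT \<le> p" "OPT \<ge> 0" unfolding OPT_def by auto
    have "c / real N \<le> 1" using cpos mpos unfolding c_def by simp
    then have "(D - 2) / (D * exp 1 - 2) \<le> 1" using alpha_le by linarith
    then have "(D - 2) / (D * exp 1 - 2) * OPT \<le> 1 * OPT" using o1
      by (intro mult_right_mono) auto
    then show ?thesis using o1 unfolding p_def OPT_def D_def by simp
  next
    case False
    then have "real N * alg_lambda n N r mus T > exp (D - 2)" using run2 by auto
    then have "(D - 2) * R / c > D - 2" unfolding lam RT by simp
    then have "(D - 2) * R > (D - 2) * c" using cpos by (simp add: field_simps)
    then have Rc: "R > c" using Dgt by simp
    have Tpos: "T > 0"
    proof (rule ccontr)
      assume "\<not> T > 0"
      then have "T = 0" by simp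
      then have "R = 0" using RT by simp
      then show False using Rc cpos by simp
    qed
    define L where "L = mus ! (T - 1)"
    define d where "d = v L / real (r L)"
    have LS1: "L \<in> S" using Tpos unfolding L_def S_def T_def by auto
    have LS: "L \<in> S" "L \<in> {1..n}" using LS1 SS by auto
    have dnn: "d \<ge> 0" unfolding d_def using LS vnn by simp
    have chosen: "\<And>i. i \<in> S \<Longrightarrow> d * real (r i) \<le> v i"
    proof -
      fix i assume "i \<in> S"
      then obtain t where t: "t < T" "i = mus ! t" unfolding S_def T_def by (auto simp: in_set_conv_nth)
      have ri: "real (r i) > 0" using \<open>i \<in> S\<close> SS assms(3) by auto
      show "d * real (r i) \<le> v i"
      proof (cases "t = T - 1")
        case True
        then show ?thesis unfolding d_def L_def using t ri by simp
      next
        case False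
        then have "t < T - 1" using t by simp
        have "L \<notin> set (take t mus)"
        proof
          assume "L \<in> set (take t mus)"
          then obtain j where "j < t" "L = mus ! j"
            by (auto simp: in_set_conv_nth)
          then show False using dist \<open>t < T - 1\<close> Tpos unfolding L_def T_def
            by (simp add: nth_eq_iff_index_eq)
        qed
        then have "L \<in> {1..n} - set (take t mus)" using LS by auto
        then have "d \<le> v i / real (r i)" using run1 t unfolding d_def by auto
        then show ?thesis using ri by (simp add: field_simps)
      qed
    qed
    have unch: "\<And>i. i \<in> {1..n} \<Longrightarrow> i \<notin> S \<Longrightarrow> v i \<le> d * real (r i)"
    proof -
      fix i assume i: "i \<in> {1..n}" "i \<notin> S"
      have ri: "real (r i) > 0" using i assms(3) by auto
      have "set (take (T - 1) mus) \<subseteq> S" unfolding S_def by (rule set_take_subset)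
      then have "i \<in> {1..n} - set (take (T - 1) mus)" using i by auto
      then have "v i / real (r i) \<le> d" using run1 Tpos unfolding d_def L_def by auto
      then show "v i \<le> d * real (r i)" using ri by (simp add: field_simps)
    qed
    have pdR: "d * R \<le> p" unfolding pS R_def sum_distrib_left
      using chosen by (intro sum_mono) auto
    have bound: "\<And>a x. wdp_feasible n N Br r a x \<Longrightarrow> wdp_value n v x \<le> p * real N / c"
    proof -
      fix a x assume fx: "wdp_feasible n N Br r a x"
      have x01: "\<forall>i\<in>{1..n}. x i \<in> {0,1}" using feas_bound(2)[OF fx] .
      have capn: "(\<Sum>i=1..n. r i * x i) \<le> N" using feas_bound(1)[OF fx] .
      have cap: "(\<Sum>i=1..n. real (r i) * real (x i)) \<le> real N"
      proof -
        have "(\<Sum>i=1..n. real (r i) * real (x i)) = real (\<Sum>i=1..n. r i * x i)" by simp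
        then show ?thesis using capn by linarith
      qed
      have pt: "\<And>i. i \<in> {1..n} \<Longrightarrow> v i * real (x i) \<le>
              (if i \<in> S then v i - d * real (r i) else 0) + d * (real (r i) * real (x i))"
      proof -
        fix i assume i: "i \<in> {1..n}"
        have "x i = 0 \<or> x i = 1" using x01 i by auto
        then show "v i * real (x i) \<le>
              (if i \<in> S then v i - d * real (r i) else 0) + d * (real (r i) * real (x i))"
          using chosen[of i] unch[OF i] by auto
      qed
      have "wdp_value n v x \<le> (\<Sum>i=1..n. (if i \<in> S then v i - d * real (r i) else 0)
                  + d * (real (r i) * real (x i)))"
        unfolding wdp_value_def using pt by (intro sum_mono) auto
      also have "\<dots> = (\<Sum>i=1..n. (if i \<in> S then v i - d * real (r i) else 0))
                  + d * (\<Sum>i=1..n. real (r i) * real (x i))"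
        by (simp add: sum.distrib sum_distrib_left)
      also have "(\<Sum>i=1..n. (if i \<in> S then v i - d * real (r i) else 0))
              = (\<Sum>i\<in>{1..n} \<inter> S. v i - d * real (r i))"
        by (simp add: sum.inter_restrict)
      also have "{1..n} \<inter> S = S" using SS by auto
      also have "(\<Sum>i\<in>S. v i - d * real (r i)) = p - d * R"
        unfolding pS R_def by (simp add: sum_subtractf sum_distrib_left)
      finally have vb: "wdp_value n v x \<le> p - d * R + d * (\<Sum>i=1..n. real (r i) * real (x i))" .
      have "d * (\<Sum>i=1..n. real (r i) * real (x i)) \<le> d * real N"
        using cap dnn by (rule mult_left_mono)
      with vb have vb2: "wdp_value n v x \<le> p + d * (real N - R)" by (simp add: algebra_simps)
      have v0: "wdp_value n v x \<ge> 0" by (rule val_nn)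
      have "wdp_value n v x * c \<le> p * real N"
      proof (cases "real N \<ge> R")
        case True
        have "wdp_value n v x * c \<le> wdp_value n v x * R" using v0 Rc by (intro mult_left_mono) auto
        also have "\<dots> \<le> (p + d * (real N - R)) * R" using vb2 Rc cpos by (intro mult_right_mono) auto
        also have "\<dots> = p * R + (d * R) * (real N - R)" by (simp add: algebra_simps)
        also have "\<dots> \<le> p * R + p * (real N - R)" using pdR True by (intro add_left_mono mult_right_mono) auto
        also have "\<dots> = p * real N" by (simp add: algebra_simps)
        finally show ?thesis .
      next
        case False
        then have "d * (real N - R) \<le> 0" using dnn by (intro mult_nonneg_nonpos) auto
        then have "wdp_value n v x \<le> p" using vb2 by linarith
        moreover have "c \<le> real N" unfolding c_def by simp
        ultimately show ?thesis using v0 pnn cpos by (intro mult_mono) auto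
      qed
      then show "wdp_value n v x \<le> p * real N / c" using cpos by (simp add: field_simps)
    qed
    from opt_bound[OF bound] have o1: "OPT \<le> p * real N / c" "OPT \<ge> 0" unfolding OPT_def by auto
    have Npos: "real N > 0" using cpos unfolding c_def by linarith
    have "(D - 2) / (D * exp 1 - 2) * OPT \<le> c / real N * OPT"
      using alpha_le o1 by (intro mult_right_mono) auto
    also have "\<dots> \<le> c / real N * (p * real N / c)" using o1 cpos Npos
      by (intro mult_left_mono) auto
    also have "\<dots> = p" using cpos Npos by simp
    finally show ?thesis unfolding p_def OPT_def D_def .
  qed
qed

end
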